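(* Let $n\ge1$ and let $\hat\pi$ be a linked cycle on $[n]$. Then in the marked linear representation of $\hat\pi$, the number of arcs plus the number of marks equals $n-1$.
   Context: Two finite sets of integers $E,F$ are nearly disjoint if for every $i\in E\cap F$ either ($i=\min(E)$, $|E|>1$, $i\ne\min(F)$) or ($i=\min(F)$, $|F|>1$, $i\ne\min(E)$). A linked partition of $[n]$ is a set of nonempty subsets (blocks) of $[n]$ with union $[n]$, any two distinct blocks nearly disjoint; each element lies in one or two blocks (singly/doubly covered). A linked cycle on $[n]$ is a linked partition of $[n]$ in which the elements of each block are arranged in a cycle; a cycle is written $(i_1i_2\dots i_t)$ with $i_1$ its minimum. The linear representation of $\hat\pi$: for each $i\in[n]$ create vertices as follows: if $i$ is singly covered and is the minimum of its cycle, which has $k+1$ elements, create $i^{(1)},\dots,i^{(k)}$ if $k\ge1$, and a single isolated vertex $i^{(1)}$ if $k=0$; if $i$ is singly covered and not the minimum of its cycle, create $i^{(0)}$; if $i$ is doubly covered and is the minimum of a cycle of size $k+1$, create $i^{(0)},i^{(1)},\dots,i^{(k)}$. Vertices are placed on a line ordered by $i$ and then by superscript. For each cycle $(i_1i_2\dots i_t)$ with $t\ge2$ draw the arcs $(i_1^{(j)},i_{t+1-j}^{(0)})$ for $j=1,\dots,t-1$. The marked linear representation additionally places a mark immediately before $i^{(1)}$ for each singly covered $i\neq1$ that is the minimum of its cycle. *)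

theory Defs
  imports Main
begin

definition nearly_disjoint :: "nat set \<Rightarrow> nat set \<Rightarrow> bool" where
  "nearly_disjoint E F \<longleftrightarrow>
     (\<forall>i \<in> E \<inter> F.
        (i = Min E \<and> card E > 1 \<and> i \<noteq> Min F) \<or>
        (i = Min F \<and> card F > 1 \<and> i \<noteq> Min E))"

definition linked_partition :: "nat \<Rightarrow> nat set set \<Rightarrow> bool" where
  "linked_partition n P \<longleftrightarrow>
     (\<forall>B \<in> P. B \<noteq> {}) \<and> \<Union>P = {1..n} \<and>
     (\<forall>E \<in> P. \<forall>F \<in> P. E \<noteq> F \<longrightarrow> nearly_disjoint E F)"

text \<open>A cycle is represented
  canonically by the list [i1, i2, ..., it] of its elements (distinct), starting with its
  minimum i1; distinct cycles have distinct underlying blocks, and the blocks form a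
  linked partition of [n].\<close>
definition linked_cycle :: "nat \<Rightarrow> nat list set \<Rightarrow> bool" where
  "linked_cycle n C \<longleftrightarrow>
     (\<forall>c \<in> C. c \<noteq> [] \<and> distinct c \<and> hd c = Min (set c)) \<and>
     inj_on set C \<and>
     linked_partition n (set ` C)"

definition covering_cycles :: "nat list set \<Rightarrow> nat \<Rightarrow> nat list set" where
  "covering_cycles C i = {c \<in> C. i \<in> set c}"

definition singly_covered :: "nat list set \<Rightarrow> nat \<Rightarrow> bool" where
  "singly_covered C i \<longleftrightarrow> card (covering_cycles C i) = 1"

definition doubly_covered :: "nat list set \<Rightarrow> nat \<Rightarrow> bool" where
  "doubly_covered C i \<longleftrightarrow> card (covering_cycles C i) = 2"

definition is_cycle_min :: "nat list set \<Rightarrow> nat \<Rightarrow> bool" where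
  "is_cycle_min C i \<longleftrightarrow> (\<exists>c \<in> C. hd c = i)"

text \<open>Vertices of the linear representation: vertex i^(s) is the pair (i, s).\<close>
definition lin_vertices :: "nat \<Rightarrow> nat list set \<Rightarrow> (nat \<times> nat) set" where
  "lin_vertices n C =
     {(i, s) | i s c. i \<in> {1..n} \<and> singly_covered C i \<and> c \<in> C \<and> hd c = i \<and>
                     1 \<le> s \<and> s \<le> max 1 (length c - 1)}
   \<union> {(i, 0) | i. i \<in> {1..n} \<and> singly_covered C i \<and> \<not> is_cycle_min C i}
   \<union> {(i, s) | i s c. i \<in> {1..n} \<and> doubly_covered C i \<and> c \<in> C \<and> hd c = i \<and>
                     s \<le> length c - 1}"

text \<open>Arcs: for each cycle (i1 ... it) with t \<ge> 2, the arcs (i1^(j), i_(t+1-j)^(0)),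
  j = 1..t-1 (list indices are 0-based, so i_(t+1-j) = c ! (t - j)).\<close>
definition lin_arcs :: "nat list set \<Rightarrow> ((nat \<times> nat) \<times> (nat \<times> nat)) set" where
  "lin_arcs C =
     {((hd c, j), (c ! (length c - j), 0)) | c j.
        c \<in> C \<and> 2 \<le> length c \<and> 1 \<le> j \<and> j \<le> length c - 1}"

text \<open>Marks: one mark (immediately before i^(1)) for each singly covered i \<noteq> 1
  that is the minimum of its cycle; we identify a mark with its element i.\<close>
definition lin_marks :: "nat \<Rightarrow> nat list set \<Rightarrow> nat set" where
  "lin_marks n C = {i \<in> {1..n}. i \<noteq> 1 \<and> singly_covered C i \<and> is_cycle_min C i}"

end

theory Submission
  imports Defs
begin

lemma lc_cyc:
  assumes "linked_cycle n C" "c \<in> C"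
  shows "c \<noteq> [] \<and> distinct c \<and> hd c = Min (set c)"
  using assms unfolding linked_cycle_def by blast

lemma lc_sub:
  assumes "linked_cycle n C" "c \<in> C"
  shows "set c \<subseteq> {1..n}"
  using assms unfolding linked_cycle_def linked_partition_def by blast

lemma lc_fin:
  assumes "linked_cycle n C"
  shows "finite C"
proof -
  have "set ` C \<subseteq> Pow {1..n}" using lc_sub[OF assms] by blast
  hence "finite (set ` C)" by (meson finite_Pow_iff finite_atLeastAtMost finite_subset)
  moreover have "inj_on set C" using assms unfolding linked_cycle_def by blast
  ultimately show ?thesis using finite_imageD by blast
qed

lemma lc_nd:
  assumes "linked_cycle n C" "c \<in> C" "d \<in> C" "c \<noteq> d"
  shows "nearly_disjoint (set c) (set d)"
proof -
  have "inj_on set C" using assms unfolding linked_cycle_def by blast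
  hence "set c \<noteq> set d" using assms by (meson inj_onD)
  thus ?thesis using assms unfolding linked_cycle_def linked_partition_def by blast
qed

lemma lc_pair:
  assumes "linked_cycle n C" "c \<in> C" "d \<in> C" "c \<noteq> d" "i \<in> set c" "i \<in> set d"
  shows "i = hd c \<or> i = hd d"
  using lc_nd[OF assms(1-4)] assms(5,6) lc_cyc[OF assms(1,2)] lc_cyc[OF assms(1,3)]
  unfolding nearly_disjoint_def by auto

lemma lc_hd_inj:
  assumes "linked_cycle n C"
  shows "inj_on hd C"
proof (rule inj_onI, rule ccontr)
  fix c d assume h: "c \<in> C" "d \<in> C" "hd c = hd d" "c \<noteq> d"
  have c1: "hd c \<in> set c" "hd d \<in> set d"
    using lc_cyc[OF assms h(1)] lc_cyc[OF assms h(2)] by auto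
  show False
    using lc_nd[OF assms h(1,2,4)] c1 h(3) lc_cyc[OF assms h(1)] lc_cyc[OF assms h(2)]
    unfolding nearly_disjoint_def by auto
qed

lemma aux_nat: "(a::nat) \<le> x + y \<Longrightarrow> x \<le> Suc 0 \<Longrightarrow> y = 0 \<Longrightarrow> a = 2 \<Longrightarrow> False"
  by linarith

lemma aux2: "(a::nat) \<le> x + y \<Longrightarrow> x = 0 \<Longrightarrow> y \<le> Suc 0 \<Longrightarrow> a \<le> 1"
  by linarith

lemma aux3: "(a::nat) \<le> x + y \<Longrightarrow> x \<le> Suc 0 \<Longrightarrow> y \<le> Suc 0 \<Longrightarrow> a \<le> 2"
  by linarith

lemma lc_cov_le2:
  assumes "linked_cycle n C"
  shows "card (covering_cycles C i) \<le> 2 \<and>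
         (card (covering_cycles C i) = 2 \<longrightarrow> (\<exists>c\<in>C. hd c = i)) \<and>
         ((\<forall>c\<in>C. i \<in> set c \<longrightarrow> hd c = i) \<longrightarrow> card (covering_cycles C i) \<le> 1)"
proof -
  let ?X = "{c \<in> covering_cycles C i. hd c \<noteq> i}"
  let ?Y = "{c \<in> covering_cycles C i. hd c = i}"
  have fin: "finite (covering_cycles C i)" using lc_fin[OF assms]
    unfolding covering_cycles_def by simp
  have X: "card ?X \<le> Suc 0"
    using lc_fin[OF assms] lc_pair[OF assms] unfolding covering_cycles_def
    by (subst card_le_Suc0_iff_eq) auto
  have Y: "card ?Y \<le> Suc 0"
    using lc_fin[OF assms] lc_hd_inj[OF assms] unfolding covering_cycles_def
    by (subst card_le_Suc0_iff_eq) (auto dest: inj_onD)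
  have U: "covering_cycles C i = ?X \<union> ?Y" by auto
  have cu: "card (covering_cycles C i) \<le> card ?X + card ?Y"
    by (subst U) (rule card_Un_le)
  have ge: "card ?Y \<ge> 1" if "card (covering_cycles C i) = 2"
    using cu X that by linarith
  have "card (covering_cycles C i) = 2 \<longrightarrow> ?Y \<noteq> {}"
    using ge by fastforce
  hence A: "card (covering_cycles C i) = 2 \<longrightarrow> (\<exists>c\<in>C. hd c = i)"
    unfolding covering_cycles_def by auto
  have "(\<forall>c\<in>C. i \<in> set c \<longrightarrow> hd c = i) \<longrightarrow> ?X = {}"
    unfolding covering_cycles_def by auto
  hence "(\<forall>c\<in>C. i \<in> set c \<longrightarrow> hd c = i) \<longrightarrow> card ?X = 0"
    by (metis card.empty)
  hence B: "(\<forall>c\<in>C. i \<in> set c \<longrightarrow> hd c = i) \<longrightarrow> card (covering_cycles C i) \<le> 1"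
    using aux2[OF cu _ Y] by blast
  have "card (covering_cycles C i) \<le> 2" by (rule aux3[OF cu X Y])
  thus ?thesis using A B by blast
qed

lemma lc_cov_ge1:
  assumes "linked_cycle n C" "i \<in> {1..n}"
  shows "card (covering_cycles C i) \<ge> 1"
proof -
  have "i \<in> \<Union>(set ` C)" using assms unfolding linked_cycle_def linked_partition_def by blast
  then obtain c where "c \<in> C" "i \<in> set c" by auto
  hence "covering_cycles C i \<noteq> {}" unfolding covering_cycles_def by auto
  moreover have "finite (covering_cycles C i)" using lc_fin[OF assms(1)]
    unfolding covering_cycles_def by simp
  ultimately show ?thesis by (simp add: Suc_le_eq card_gt_0_iff)
qed

theorem proposition4p4:
  fixes n :: nat and C :: "nat list set"
  assumes "n \<ge> 1" and "linked_cycle n C"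
  shows "card (lin_arcs C) + card (lin_marks n C) = n - 1"
proof -
  note lc = assms(2)
  have finC: "finite C" using lc_fin[OF lc] .
  define A where "A c = (\<lambda>j. ((hd c, j), (c ! (length c - j), 0::nat))) ` {1..length c - 1}" for c :: "nat list"
  have arcs: "lin_arcs C = (\<Union>c\<in>C. A c)"
    unfolding lin_arcs_def A_def by (auto, force)
  have cardA: "card (A c) = length c - 1" for c
  proof -
    have "inj_on (\<lambda>j. ((hd c, j), (c ! (length c - j), 0::nat))) {1..length c - 1}"
      by (auto intro: inj_onI)
    thus ?thesis unfolding A_def by (simp add: card_image)
  qed
  have "card (lin_arcs C) = (\<Sum>c\<in>C. card (A c))"
    unfolding arcs
  proof (rule card_UN_disjoint[OF finC])
    show "\<forall>c\<in>C. finite (A c)" unfolding A_def by auto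
    show "\<forall>c\<in>C. \<forall>d\<in>C. c \<noteq> d \<longrightarrow> A c \<inter> A d = {}"
      using lc_hd_inj[OF lc] unfolding A_def by (auto dest: inj_onD)
  qed
  hence arcs_eq: "card (lin_arcs C) = (\<Sum>c\<in>C. length c - 1)" using cardA by simp
  have len1: "length c \<ge> 1" if "c \<in> C" for c using lc_cyc[OF lc that] by (cases c) auto
  have sl: "(\<Sum>c\<in>C. length c - 1) + card C = (\<Sum>c\<in>C. length c)"
  proof -
    have "(\<Sum>c\<in>C. length c - 1 + 1) = (\<Sum>c\<in>C. length c - 1) + (\<Sum>c\<in>C. (1::nat))"
      by (rule sum.distrib)
    hence "(\<Sum>c\<in>C. length c - 1) + card C = (\<Sum>c\<in>C. length c - 1 + 1)"
      by simp
    also have "\<dots> = (\<Sum>c\<in>C. length c)" by (intro sum.cong refl, drule len1, arith)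
    finally show ?thesis .
  qed
  have sw: "(\<Sum>c\<in>C. length c) = (\<Sum>i\<in>{1..n}. card (covering_cycles C i))"
  proof -
    have "(\<Sum>c\<in>C. length c) = (\<Sum>c\<in>C. \<Sum>i\<in>{1..n}. if i \<in> set c then 1 else 0)"
    proof (intro sum.cong refl)
      fix c assume c: "c \<in> C"
      have "length c = card (set c)" using lc_cyc[OF lc c] by (simp add: distinct_card)
      also have "set c = {i \<in> {1..n}. i \<in> set c}" using lc_sub[OF lc c] by auto
      also have "card \<dots> = (\<Sum>i\<in>{1..n}. if i \<in> set c then 1 else 0)"
        unfolding card_eq_sum by (rule sum.inter_filter) simp
      finally show "length c = \<dots>" .
    qed
    also have "\<dots> = (\<Sum>i\<in>{1..n}. \<Sum>c\<in>C. if i \<in> set c then 1 else 0)"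
      by (rule sum.swap)
    also have "\<dots> = (\<Sum>i\<in>{1..n}. card (covering_cycles C i))"
      unfolding covering_cycles_def unfolding card_eq_sum by (intro sum.cong refl sum.inter_filter[symmetric] finC)
    finally show ?thesis .
  qed
  define D where "D = {i \<in> {1..n}. doubly_covered C i}"
  define S where "S = {i \<in> {1..n}. singly_covered C i \<and> is_cycle_min C i}"
  have cov: "card (covering_cycles C i) = 1 + (if i \<in> D then 1 else 0)" if "i \<in> {1..n}" for i
    using lc_cov_le2[OF lc, of i] lc_cov_ge1[OF lc that] that
    unfolding D_def doubly_covered_def by auto
  have "(\<Sum>i\<in>{1..n}. card (covering_cycles C i)) = (\<Sum>i\<in>{1..n}. 1 + (if i \<in> D then 1 else 0))"
    using cov by (intro sum.cong) auto
  also have "\<dots> = (\<Sum>i\<in>{1..n}. (1::nat)) + (\<Sum>i\<in>{1..n}. if i \<in> D then 1 else 0)"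
    by (rule sum.distrib)
  also have "(\<Sum>i\<in>{1..n}. if i \<in> D then 1 else 0) = (\<Sum>i\<in>{1..n}. if doubly_covered C i then (1::nat) else 0)"
    unfolding D_def by (intro sum.cong refl) simp
  also have "\<dots> = card D"
    unfolding D_def card_eq_sum by (rule sum.inter_filter[symmetric]) simp
  finally have sumcov: "(\<Sum>i\<in>{1..n}. card (covering_cycles C i)) = n + card D" by simp
  have hU: "hd ` C = D \<union> S"
  proof
    show "hd ` C \<subseteq> D \<union> S"
    proof
      fix i assume "i \<in> hd ` C"
      then obtain c where c: "c \<in> C" "i = hd c" by auto
      have "i \<in> set c" using c lc_cyc[OF lc c(1)] by auto
      hence i: "i \<in> {1..n}" using lc_sub[OF lc c(1)] by auto
      have "is_cycle_min C i" using c unfolding is_cycle_min_def by auto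
      thus "i \<in> D \<union> S" using cov[OF i] i
        unfolding D_def S_def singly_covered_def doubly_covered_def by (auto split: if_splits)
    qed
    show "D \<union> S \<subseteq> hd ` C"
    proof
      fix i assume "i \<in> D \<union> S"
      hence "\<exists>c\<in>C. hd c = i"
      proof
        assume "i \<in> D"
        hence "card (covering_cycles C i) = 2" unfolding D_def doubly_covered_def by simp
        thus ?thesis using lc_cov_le2[OF lc, of i] by simp
      next
        assume "i \<in> S" thus ?thesis unfolding S_def is_cycle_min_def by simp
      qed
      thus "i \<in> hd ` C" by force
    qed
  qed
  have DS: "D \<inter> S = {}" unfolding D_def S_def doubly_covered_def singly_covered_def by auto
  have fD: "finite D" and fS: "finite S" unfolding D_def S_def by auto
  have "card C = card (hd ` C)" by (rule card_image[OF lc_hd_inj[OF lc], symmetric])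
  also have "\<dots> = card (D \<union> S)" by (simp only: hU)
  also have "\<dots> = card D + card S" by (rule card_Un_disjoint[OF fD fS DS])
  finally have cardC: "card C = card D + card S" .
  have one: "1 \<in> S"
  proof -
    have i1: "(1::nat) \<in> {1..n}" using assms(1) by auto
    have hd1: "hd c = 1" if "c \<in> C" "1 \<in> set c" for c
    proof -
      have "hd c = Min (set c)" using lc_cyc[OF lc that(1)] by auto
      moreover have "Min (set c) \<le> 1" using that by auto
      moreover have "Min (set c) \<in> set c" using lc_cyc[OF lc that(1)] by auto
      ultimately show ?thesis using lc_sub[OF lc that(1)] by fastforce
    qed
    have "card (covering_cycles C 1) \<le> 1" using lc_cov_le2[OF lc, of 1] hd1 by auto
    hence sc: "singly_covered C 1" using lc_cov_ge1[OF lc i1] unfolding singly_covered_def by auto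
    have "1 \<in> \<Union>(set ` C)" using lc i1 unfolding linked_cycle_def linked_partition_def by blast
    then obtain c where "c \<in> C" "1 \<in> set c" by auto
    hence "is_cycle_min C 1" using hd1 unfolding is_cycle_min_def by auto
    thus ?thesis using sc i1 unfolding S_def by auto
  qed
  have "lin_marks n C = S - {1}" unfolding lin_marks_def S_def by auto
  hence marks: "card (lin_marks n C) = card S - 1" using one fS by simp
  have "card S \<noteq> 0" using one fS by auto
  thus ?thesis using arcs_eq marks cardC sumcov sl sw by linarith
qed

end
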